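(* Let $\{X_s\}_{s\in\mathbb N_0}$ be a sequence of Banach spaces satisfying (F1)–(F3), $\{\Theta_s\}_{s\in\mathbb N_0}$ a sequence of $\lambda_s$–$BK$-spaces satisfying (F1)–(F3), and $\{g_i\}_{i=1}^\infty$ a pre-$F$-frame for $X_F$ with respect to $\Theta_F$, with $U:X_F\to\Theta_F$, $Uf=\{g_i(f)\}_{i=1}^\infty$. Then $\{g_i\}$ is an $F$-frame for $X_F$ with respect to $\Theta_F$ if and only if there exists an $F$-bounded projection $\mathcal P$ (linear, $\mathcal P^2=\mathcal P$) from $\Theta_F$ onto $R(U)$.
   Context: Conditions (F1)–(F3) for a sequence $\{Y_s,|\cdot|_s\}_{s\in\mathbb N_0}$ of separable Banach spaces: (F1) $\{0\}\neq\bigcap_{s}Y_s\subseteq\dots\subseteq Y_1\subseteq Y_0$; (F2) $|\cdot|_0\le|\cdot|_1\le\dots$; (F3) $Y_F:=\bigcap_s Y_s$ is dense in each $Y_s$. $X_F=\bigcap_sX_s$, $\Theta_F=\bigcap_s\Theta_s$. $BK$-space: Banach sequence space with continuous coordinate functionals. $\lambda$–$BK$-space: $BK$-space containing all canonical vectors $e_i$ with $|||\sum_{i=1}^nc_ie_i|||\le\lambda|||\{c_i\}|||$ for all $n$. Pre-$F$-frame: $\{g_i\}\in(X_F^* )^{\mathbb N}$ with $\{g_i(f)\}\in\Theta_F$ for $f\in X_F$ and, for each $s$, constants $0<A_s\le B_s<\infty$ with $A_s\|f\|_s\le|||\{g_i(f)\}|||_s\le B_s\|f\|_s$, $f\in X_F$.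 $F$-frame: a pre-$F$-frame for which there is an $F$-bounded operator $V:\Theta_F\to X_F$ with $V(\{g_i(f)\})=f$ for all $f\in X_F$. An operator between these spaces is $F$-bounded if for each $s$ there is $K_s$ with $\|Vc\|_s\le K_s|||c|||_s$ (norm estimates in the $s$-th norms of domain and target). *)

theory Defs
  imports "HOL-Analysis.Analysis" "HOL-Library.Function_Algebras"
begin

instantiation "fun" :: (type, real_vector) real_vector
begin
definition scaleR_fun :: "real \<Rightarrow> ('a \<Rightarrow> 'b) \<Rightarrow> 'a \<Rightarrow> 'b" where
  "scaleR_fun a f = (\<lambda>x. a *\<^sub>R f x)"
instance
  by standard (auto simp: scaleR_fun_def fun_eq_iff scaleR_add_right scaleR_add_left)
end

definition linear_on :: "'a::real_vector set \<Rightarrow> ('a \<Rightarrow> 'b::real_vector) \<Rightarrow> bool" where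
  "linear_on V T \<longleftrightarrow>
     (\<forall>x\<in>V. \<forall>y\<in>V. \<forall>a b. T (a *\<^sub>R x + b *\<^sub>R y) = a *\<^sub>R T x + b *\<^sub>R T y)"

definition is_norm_on :: "'a::real_vector set \<Rightarrow> ('a \<Rightarrow> real) \<Rightarrow> bool" where
  "is_norm_on V N \<longleftrightarrow>
     (\<forall>x\<in>V. 0 \<le> N x) \<and> (\<forall>x\<in>V. N x = 0 \<longleftrightarrow> x = 0) \<and>
     (\<forall>x\<in>V. \<forall>a. N (a *\<^sub>R x) = \<bar>a\<bar> * N x) \<and>
     (\<forall>x\<in>V. \<forall>y\<in>V. N (x + y) \<le> N x + N y)"

definition sep_banach :: "'a::real_vector set \<Rightarrow> ('a \<Rightarrow> real) \<Rightarrow> bool" where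
  "sep_banach V N \<longleftrightarrow>
     subspace V \<and> is_norm_on V N \<and>
     (\<forall>u. (\<forall>n. u n \<in> V) \<and> (\<forall>e>0. \<exists>M. \<forall>m\<ge>M. \<forall>n\<ge>M. N (u m - u n) < e)
          \<longrightarrow> (\<exists>x\<in>V. (\<lambda>n. N (u n - x)) \<longlonglongrightarrow> 0)) \<and>
     (\<exists>D\<subseteq>V. countable D \<and> (\<forall>x\<in>V. \<forall>e>0. \<exists>d\<in>D. N (x - d) < e))"

definition Fint :: "(nat \<Rightarrow> 'a set) \<Rightarrow> 'a set" where
  "Fint Y = (\<Inter>s. Y s)"

definition F_seq :: "(nat \<Rightarrow> 'a::real_vector set) \<Rightarrow> (nat \<Rightarrow> 'a \<Rightarrow> real) \<Rightarrow> bool" where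
  "F_seq Y N \<longleftrightarrow>
     (\<forall>s. sep_banach (Y s) (N s)) \<and>
     Fint Y \<noteq> {0} \<and> (\<forall>s. Y (Suc s) \<subseteq> Y s) \<and>
     (\<forall>s. \<forall>y\<in>Y (Suc s). N s y \<le> N (Suc s) y) \<and>
     (\<forall>s. \<forall>y\<in>Y s. \<forall>e>0. \<exists>z\<in>Fint Y. N s (y - z) < e)"

definition canon :: "nat \<Rightarrow> nat \<Rightarrow> real" where
  "canon i = (\<lambda>j. if j = i then 1 else 0)"

definition BK_space :: "(nat \<Rightarrow> real) set \<Rightarrow> ((nat \<Rightarrow> real) \<Rightarrow> real) \<Rightarrow> bool" where
  "BK_space T N \<longleftrightarrow> sep_banach T N \<and>
     (\<forall>i. \<exists>C. \<forall>c\<in>T. \<bar>c i\<bar> \<le> C * N c)"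

(* lambda-BK-space; sequences indexed from 0, so sum over i <= n corresponds to 1..n+1 *)
definition lambda_BK :: "(nat \<Rightarrow> real) set \<Rightarrow> ((nat \<Rightarrow> real) \<Rightarrow> real) \<Rightarrow> real \<Rightarrow> bool" where
  "lambda_BK T N lam \<longleftrightarrow> BK_space T N \<and> (\<forall>i. canon i \<in> T) \<and>
     (\<forall>c\<in>T. \<forall>n. N (\<Sum>i\<le>n. c i *\<^sub>R canon i) \<le> lam * N c)"

(* element of X_F^* : linear on X_F and continuous for the Frechet topology *)
definition F_dual :: "(nat \<Rightarrow> 'a::real_vector set) \<Rightarrow> (nat \<Rightarrow> 'a \<Rightarrow> real) \<Rightarrow> ('a \<Rightarrow> real) \<Rightarrow> bool" where
  "F_dual X N g \<longleftrightarrow> linear_on (Fint X) g \<and>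
     (\<exists>s C. \<forall>f\<in>Fint X. \<bar>g f\<bar> \<le> C * N s f)"

definition F_bounded ::
  "(nat \<Rightarrow> 'a::real_vector set) \<Rightarrow> (nat \<Rightarrow> 'a \<Rightarrow> real) \<Rightarrow> (nat \<Rightarrow> 'b \<Rightarrow> real) \<Rightarrow> ('a \<Rightarrow> 'b) \<Rightarrow> bool" where
  "F_bounded A NA NB V \<longleftrightarrow> (\<forall>s. \<exists>K. \<forall>c\<in>Fint A. NB s (V c) \<le> K * NA s c)"

definition U_op :: "(nat \<Rightarrow> 'a \<Rightarrow> real) \<Rightarrow> 'a \<Rightarrow> nat \<Rightarrow> real" where
  "U_op g f = (\<lambda>i. g i f)"

definition pre_F_frame ::
  "(nat \<Rightarrow> 'a::real_vector set) \<Rightarrow> (nat \<Rightarrow> 'a \<Rightarrow> real) \<Rightarrow>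
   (nat \<Rightarrow> (nat \<Rightarrow> real) set) \<Rightarrow> (nat \<Rightarrow> (nat \<Rightarrow> real) \<Rightarrow> real) \<Rightarrow>
   (nat \<Rightarrow> 'a \<Rightarrow> real) \<Rightarrow> bool" where
  "pre_F_frame X NX T NT g \<longleftrightarrow>
     (\<forall>i. F_dual X NX (g i)) \<and>
     (\<forall>f\<in>Fint X. U_op g f \<in> Fint T) \<and>
     (\<forall>s. \<exists>A B. 0 < A \<and> A \<le> B \<and>
        (\<forall>f\<in>Fint X. A * NX s f \<le> NT s (U_op g f) \<and> NT s (U_op g f) \<le> B * NX s f))"

definition F_frame ::
  "(nat \<Rightarrow> 'a::real_vector set) \<Rightarrow> (nat \<Rightarrow> 'a \<Rightarrow> real) \<Rightarrow>
   (nat \<Rightarrow> (nat \<Rightarrow> real) set) \<Rightarrow> (nat \<Rightarrow> (nat \<Rightarrow> real) \<Rightarrow> real) \<Rightarrow>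
   (nat \<Rightarrow> 'a \<Rightarrow> real) \<Rightarrow> bool" where
  "F_frame X NX T NT g \<longleftrightarrow> pre_F_frame X NX T NT g \<and>
     (\<exists>V. linear_on (Fint T) V \<and> V ` Fint T \<subseteq> Fint X \<and> F_bounded T NT NX V \<and>
          (\<forall>f\<in>Fint X. V (U_op g f) = f))"

end

theory Submission
  imports Defs
begin

lemma sb_basic:
  assumes "F_seq Y N" shows "subspace (Y s)" "is_norm_on (Y s) (N s)"
proof -
  have "sep_banach (Y s) (N s)" using assms unfolding F_seq_def by blast
  thus "subspace (Y s)" "is_norm_on (Y s) (N s)" unfolding sep_banach_def by simp_all
qed

lemma Fint_subspace:
  assumes "F_seq Y N" shows "subspace (Fint Y)"
proof -
  have "\<forall>s. subspace (Y s)" using sb_basic[OF assms(1)] by blast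
  thus ?thesis unfolding Fint_def subspace_def by auto
qed

lemma Fint_sub: "x \<in> Fint Y \<Longrightarrow> x \<in> Y s"
  by (auto simp: Fint_def)

lemma N_zero:
  assumes "F_seq Y N" shows "N s 0 = 0"
proof -
  have "subspace (Y s)" "is_norm_on (Y s) (N s)" using sb_basic[OF assms(1)] by blast+
  thus ?thesis by (auto simp: is_norm_on_def subspace_def)
qed

lemma N_pos_zero:
  assumes "F_seq Y N" "x \<in> Y s" "N s x \<le> 0" shows "x = 0"
proof -
  have "is_norm_on (Y s) (N s)" using sb_basic[OF assms(1)] by blast
  thus ?thesis using assms(2,3) unfolding is_norm_on_def by (metis order_antisym)
qed

lemma N_nonneg:
  assumes "F_seq Y N" "x \<in> Y s" shows "0 \<le> N s x"
proof -
  have "is_norm_on (Y s) (N s)" using sb_basic[OF assms(1)] by blast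
  hence "\<forall>x\<in>Y s. 0 \<le> N s x" unfolding is_norm_on_def by (rule conjunct1)
  thus ?thesis using assms(2) by (rule bspec)
qed

lemma U_lin:
  assumes "\<forall>i. F_dual X NX (g i)" "x \<in> Fint X" "y \<in> Fint X"
  shows "U_op g (a *\<^sub>R x + b *\<^sub>R y) = a *\<^sub>R U_op g x + b *\<^sub>R U_op g y"
  using assms unfolding F_dual_def linear_on_def U_op_def
  by (auto simp: fun_eq_iff scaleR_fun_def)

theorem mainTheorem2:
  fixes X :: "nat \<Rightarrow> 'a::real_vector set" and NX :: "nat \<Rightarrow> 'a \<Rightarrow> real"
    and T :: "nat \<Rightarrow> (nat \<Rightarrow> real) set" and NT :: "nat \<Rightarrow> (nat \<Rightarrow> real) \<Rightarrow> real"
    and lam :: "nat \<Rightarrow> real" and g :: "nat \<Rightarrow> 'a \<Rightarrow> real"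
  assumes "F_seq X NX"
    and "F_seq T NT"
    and "\<forall>s. lambda_BK (T s) (NT s) (lam s)"
    and "pre_F_frame X NX T NT g"
  shows "F_frame X NX T NT g \<longleftrightarrow>
    (\<exists>P. linear_on (Fint T) P \<and> (\<forall>c\<in>Fint T. P (P c) = P c) \<and>
         P ` Fint T = U_op g ` Fint X \<and> F_bounded T NT NT P)"
proof -
  let ?U = "U_op g"
  have dual: "\<forall>i. F_dual X NX (g i)" and Uin: "\<forall>f\<in>Fint X. ?U f \<in> Fint T"
    and bnd: "\<forall>s. \<exists>A B. 0 < A \<and> A \<le> B \<and>
        (\<forall>f\<in>Fint X. A * NX s f \<le> NT s (?U f) \<and> NT s (?U f) \<le> B * NX s f)"
    using assms(4) by (auto simp: pre_F_frame_def)
  have sX: "subspace (Fint X)" using Fint_subspace[OF assms(1)] .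
  have sT: "subspace (Fint T)" using Fint_subspace[OF assms(2)] .
  have inj: "inj_on ?U (Fint X)"
  proof (rule inj_onI)
    fix x y assume xy: "x \<in> Fint X" "y \<in> Fint X" "?U x = ?U y"
    have d: "x - y \<in> Fint X" using sX xy by (simp add: subspace_diff)
    have "?U (x - y) = ?U x - ?U y" using U_lin[OF dual xy(1,2), of 1 "-1"] by simp
    hence U0: "?U (x - y) = 0" using xy(3) by simp
    obtain A B where AB: "0 < A" "\<forall>f\<in>Fint X. A * NX 0 f \<le> NT 0 (?U f)" using bnd by blast
    have "A * NX 0 (x - y) \<le> 0" using AB(2) d U0 N_zero[OF assms(2)] by fastforce
    hence "NX 0 (x - y) \<le> 0" using AB(1) by (simp add: mult_le_0_iff)
    hence "x - y = 0" using N_pos_zero[OF assms(1) Fint_sub[OF d]] by blast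
    thus "x = y" by simp
  qed
  show ?thesis
  proof
    assume "F_frame X NX T NT g"
    then obtain V where V: "linear_on (Fint T) V" "V ` Fint T \<subseteq> Fint X" "F_bounded T NT NX V"
      "\<forall>f\<in>Fint X. V (?U f) = f" by (auto simp: F_frame_def)
    define P where "P = (\<lambda>c. ?U (V c))"
    have "linear_on (Fint T) P"
      unfolding linear_on_def P_def
    proof (intro ballI allI)
      fix x y a b assume xy: "x \<in> Fint T" "y \<in> Fint T"
      moreover have "V x \<in> Fint X" "V y \<in> Fint X" using V(2) xy by auto
      ultimately show "?U (V (a *\<^sub>R x + b *\<^sub>R y)) = a *\<^sub>R ?U (V x) + b *\<^sub>R ?U (V y)"
        using V(1) U_lin[OF dual] unfolding linear_on_def by (simp add: xy)
    qed
    moreover have "\<forall>c\<in>Fint T. P (P c) = P c" using V(2,4) unfolding P_def by auto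
    moreover have "P ` Fint T = ?U ` Fint X"
    proof
      show "P ` Fint T \<subseteq> ?U ` Fint X" using V(2) unfolding P_def by auto
      show "?U ` Fint X \<subseteq> P ` Fint T"
      proof
        fix z assume "z \<in> ?U ` Fint X"
        then obtain f where f: "f \<in> Fint X" "z = ?U f" by blast
        hence "z = P (?U f)" using V(4) unfolding P_def by auto
        thus "z \<in> P ` Fint T" using Uin f by auto
      qed
    qed
    moreover have "F_bounded T NT NT P"
      unfolding F_bounded_def
    proof
      fix s
      obtain K where K: "\<forall>c\<in>Fint T. NX s (V c) \<le> K * NT s c" using V(3) unfolding F_bounded_def by blast
      obtain A B where AB: "0 < A" "A \<le> B" "\<forall>f\<in>Fint X. NT s (?U f) \<le> B * NX s f" using bnd by blast
      show "\<exists>K'. \<forall>c\<in>Fint T. NT s (P c) \<le> K' * NT s c"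
      proof (intro exI ballI)
        fix c assume c: "c \<in> Fint T"
        have "NT s (P c) \<le> B * NX s (V c)" using AB(3) V(2) c unfolding P_def by auto
        also have "\<dots> \<le> B * (K * NT s c)" using K c AB by (intro mult_left_mono) auto
        finally show "NT s (P c) \<le> (B * K) * NT s c" by simp
      qed
    qed
    ultimately show "\<exists>P. linear_on (Fint T) P \<and> (\<forall>c\<in>Fint T. P (P c) = P c) \<and>
         P ` Fint T = ?U ` Fint X \<and> F_bounded T NT NT P" by blast
  next
    assume "\<exists>P. linear_on (Fint T) P \<and> (\<forall>c\<in>Fint T. P (P c) = P c) \<and>
         P ` Fint T = ?U ` Fint X \<and> F_bounded T NT NT P"
    then obtain P where P: "linear_on (Fint T) P" "\<forall>c\<in>Fint T. P (P c) = P c"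
         "P ` Fint T = ?U ` Fint X" "F_bounded T NT NT P" by blast
    define V where "V = (\<lambda>c. inv_into (Fint X) ?U (P c))"
    have VX: "V c \<in> Fint X" and UV: "?U (V c) = P c" if "c \<in> Fint T" for c
    proof -
      have "P c \<in> ?U ` Fint X" using P(3) that by blast
      thus "V c \<in> Fint X" "?U (V c) = P c" unfolding V_def
        by (auto intro: inv_into_into f_inv_into_f)
    qed
    have VU: "V (?U f) = f" if f: "f \<in> Fint X" for f
    proof -
      have "?U f \<in> P ` Fint T" using P(3) f by blast
      then obtain c where c: "c \<in> Fint T" "?U f = P c" by blast
      have "P (?U f) = ?U f" using c P(2) by simp
      thus ?thesis unfolding V_def using inv_into_f_f[OF inj f] by simp
    qed
    have "linear_on (Fint T) V"
      unfolding linear_on_def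
    proof (intro ballI allI)
      fix x y a b assume xy: "x \<in> Fint T" "y \<in> Fint T"
      have m: "a *\<^sub>R x + b *\<^sub>R y \<in> Fint T" using sT xy
        by (simp add: subspace_add subspace_scale)
      have m2: "a *\<^sub>R V x + b *\<^sub>R V y \<in> Fint X" using sX VX xy
        by (simp add: subspace_add subspace_scale)
      have "?U (V (a *\<^sub>R x + b *\<^sub>R y)) = P (a *\<^sub>R x + b *\<^sub>R y)" using UV[OF m] .
      also have "\<dots> = a *\<^sub>R P x + b *\<^sub>R P y" using P(1) xy unfolding linear_on_def by blast
      also have "\<dots> = a *\<^sub>R ?U (V x) + b *\<^sub>R ?U (V y)" using UV xy by simp
      also have "\<dots> = ?U (a *\<^sub>R V x + b *\<^sub>R V y)" using U_lin[OF dual VX[OF xy(1)] VX[OF xy(2)]] by simp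
      finally have "?U (V (a *\<^sub>R x + b *\<^sub>R y)) = ?U (a *\<^sub>R V x + b *\<^sub>R V y)" .
      thus "V (a *\<^sub>R x + b *\<^sub>R y) = a *\<^sub>R V x + b *\<^sub>R V y"
        using inj VX[OF m] m2 by (meson inj_onD)
    qed
    moreover have "V ` Fint T \<subseteq> Fint X" using VX by auto
    moreover have "F_bounded T NT NX V"
      unfolding F_bounded_def
    proof
      fix s
      obtain K where K: "\<forall>c\<in>Fint T. NT s (P c) \<le> K * NT s c" using P(4) unfolding F_bounded_def by blast
      obtain A B where AB: "0 < A" "\<forall>f\<in>Fint X. A * NX s f \<le> NT s (?U f)" using bnd by blast
      show "\<exists>K'. \<forall>c\<in>Fint T. NX s (V c) \<le> K' * NT s c"
      proof (intro exI ballI)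
        fix c assume c: "c \<in> Fint T"
        have "A * NX s (V c) \<le> NT s (?U (V c))" using AB(2) VX[OF c] by blast
        also have "\<dots> = NT s (P c)" using UV[OF c] by simp
        also have "\<dots> \<le> K * NT s c" using K c by blast
        finally have "A * NX s (V c) \<le> K * NT s c" .
        hence "NX s (V c) * A \<le> K * NT s c" by (simp add: mult.commute)
        hence "NX s (V c) \<le> (K * NT s c) / A" by (subst pos_le_divide_eq[OF AB(1)])
        thus "NX s (V c) \<le> (K / A) * NT s c" by simp
      qed
    qed
    ultimately have "linear_on (Fint T) V \<and> V ` Fint T \<subseteq> Fint X \<and> F_bounded T NT NX V \<and>
          (\<forall>f\<in>Fint X. V (U_op g f) = f)" using VU by blast
    thus "F_frame X NX T NT g" using assms(4) unfolding F_frame_def by blast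
  qed
qed

end
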